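(* Let $\theta>1$ be real with $\log\theta=p/q>1$ rational, where $p,q$ are positive integers. Then $\mathcal A_\theta\subseteq [1,\frac{p^2}{6q})$; in particular $\mathcal A_\theta$ is finite.
   Context: $\lfloor x\rfloor$ is the floor of $x$; $\log$ is the natural logarithm. For real $\theta>1$ and positive integer $n$, $M'_\theta(n)=\left\lfloor 1/(\theta^{1/n}-1)\right\rfloor$, and $\mathcal A_\theta=\{n\in\mathbb N: M'_\theta(n)\neq \lfloor n/\log\theta-1/2\rfloor\}$, where $\mathbb N$ is the set of positive integers. *)

theory Defs
  imports Complex_Main
begin

definition Mprime :: "real \<Rightarrow> nat \<Rightarrow> int" where
  "Mprime \<theta> n = \<lfloor>1 / (\<theta> powr (1 / real n) - 1)\<rfloor>"

definition A_set :: "real \<Rightarrow> nat set" where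
  "A_set \<theta> = {n::nat. n \<ge> 1 \<and> Mprime \<theta> n \<noteq> \<lfloor>real n / ln \<theta> - 1/2\<rfloor>}"

end

theory Submission
  imports Defs
begin

lemma step_pos:
  fixes f f' :: "real \<Rightarrow> real"
  assumes "x > 0" "f 0 = 0" "\<And>t. DERIV f t :> f' t" "\<And>t. t > 0 \<Longrightarrow> f' t > 0"
  shows "f x > 0"
proof -
  obtain z where z: "0 < z" "z < x" "f x - f 0 = (x - 0) * f' z"
    using MVT2[of 0 x f f'] assms by blast
  then show ?thesis using assms by simp
qed

lemma up3: "x > 0 \<Longrightarrow> exp x * (x^2 - 2*x + 2) - 2 > (0::real)"
proof -
  assume x: "x > 0"
  have d: "\<And>t. DERIV (\<lambda>t. exp t * (t^2 - 2*t + 2) - 2) t :> exp t * t^2"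
    by (auto intro!: derivative_eq_intros simp: algebra_simps power2_eq_square)
  show ?thesis using step_pos[of x "\<lambda>t. exp t * (t^2 - 2*t + 2) - 2", OF x _ d] by simp
qed

lemma up2: "x > 0 \<Longrightarrow> exp x * (x^2 - 4*x + 6) - 2*x - 6 > (0::real)"
proof -
  assume x: "x > 0"
  have d: "\<And>t. DERIV (\<lambda>t. exp t * (t^2 - 4*t + 6) - 2*t - 6) t :> exp t * (t^2 - 2*t + 2) - 2"
    by (auto intro!: derivative_eq_intros simp: algebra_simps power2_eq_square)
  show ?thesis using step_pos[of x "\<lambda>t. exp t * (t^2 - 4*t + 6) - 2*t - 6", OF x _ d] up3 by simp
qed

lemma up1: "x > 0 \<Longrightarrow> (x^2 - 6*x + 12) * (exp x - 1) - 12 * x > (0::real)"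
proof -
  assume x: "x > 0"
  have d: "\<And>t. DERIV (\<lambda>t. (t^2 - 6*t + 12) * (exp t - 1) - 12 * t) t :> exp t * (t^2 - 4*t + 6) - 2*t - 6"
    by (auto intro!: derivative_eq_intros simp: algebra_simps power2_eq_square)
  show ?thesis using step_pos[of x "\<lambda>t. (t^2 - 6*t + 12) * (exp t - 1) - 12 * t", OF x _ d] up2 by simp
qed

lemma lo2: "x > 0 \<Longrightarrow> 1 + (x - 1) * exp x > (0::real)"
proof -
  assume x: "x > 0"
  have d: "\<And>t. DERIV (\<lambda>t. 1 + (t - 1) * exp t) t :> t * exp t"
    by (auto intro!: derivative_eq_intros simp: algebra_simps)
  show ?thesis using step_pos[of x "\<lambda>t. 1 + (t - 1) * exp t", OF x _ d] by simp
qed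

lemma lo1: "x > 0 \<Longrightarrow> (2 + x) - (2 - x) * exp x > (0::real)"
proof -
  assume x: "x > 0"
  have d: "\<And>t. DERIV (\<lambda>t. (2 + t) - (2 - t) * exp t) t :> 1 + (t - 1) * exp t"
    by (auto intro!: derivative_eq_intros simp: algebra_simps)
  show ?thesis using step_pos[of x "\<lambda>t. (2 + t) - (2 - t) * exp t", OF x _ d] lo2 by simp
qed

lemma bounds:
  fixes x :: real assumes x: "x > 0"
  shows "1/x - 1/2 \<le> 1/(exp x - 1)" "1/(exp x - 1) < 1/x - 1/2 + x/12"
proof -
  have e: "exp x - 1 > 0" using x by simp
  show "1/x - 1/2 \<le> 1/(exp x - 1)"
  proof -
    have "(2 - x) * (exp x - 1) \<le> 2 * x" using lo1[OF x] by (simp add: algebra_simps)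
    then have "(2 - x) / (2*x) \<le> 1/(exp x - 1)" using e x
      by (simp add: divide_simps mult.commute)
    moreover have "1/x - 1/2 = (2 - x)/(2*x)" using x by (simp add: field_simps)
    ultimately show ?thesis by simp
  qed
  show "1/(exp x - 1) < 1/x - 1/2 + x/12"
  proof -
    have "12 * x < (x^2 - 6*x + 12) * (exp x - 1)" using up1[OF x] by simp
    then have "1/(exp x - 1) < (x^2 - 6*x + 12) / (12 * x)" using e x
      by (simp add: divide_simps mult.commute)
    moreover have "1/x - 1/2 + x/12 = (x^2 - 6*x + 12) / (12 * x)" using x
      by (simp add: field_simps power2_eq_square)
    ultimately show ?thesis by simp
  qed
qed

theorem theorem2:
  fixes \<theta> :: real and p q :: nat
  assumes "\<theta> > 1" and "p > 0" and "q > 0"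
    and "ln \<theta> = real p / real q" and "ln \<theta> > 1"
  shows "A_set \<theta> \<subseteq> {n. 1 \<le> real n \<and> real n < real p ^ 2 / (6 * real q)} \<and> finite (A_set \<theta>)"
proof -
  have sub: "A_set \<theta> \<subseteq> {n. 1 \<le> real n \<and> real n < real p ^ 2 / (6 * real q)}"
  proof
    fix n assume nA: "n \<in> A_set \<theta>"
    then have n1: "n \<ge> 1" and ne: "Mprime \<theta> n \<noteq> \<lfloor>real n / ln \<theta> - 1/2\<rfloor>"
      by (auto simp: A_set_def)
    have "real n < real p ^ 2 / (6 * real q)"
    proof (rule ccontr)
      assume "\<not> ?thesis"
      then have big: "real p ^ 2 \<le> 6 * real q * real n" using assms(3)
        by (simp add: divide_simps mult.commute)
      define L where "L = ln \<theta>"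
      define x where "x = L / real n"
      define y where "y = real n / L - 1/2"
      have Lpos: "L > 0" using assms L_def by simp
      have xpos: "x > 0" using Lpos n1 by (simp add: x_def)
      have pw: "\<theta> powr (1 / real n) = exp x"
        using assms(1) by (simp add: powr_def x_def L_def)
      have ix: "1/x = real n / L" using x_def by simp
      have b1: "y \<le> 1/(exp x - 1)" using bounds(1)[OF xpos] ix y_def by simp
      have b2: "1/(exp x - 1) < y + x/12" using bounds(2)[OF xpos] ix y_def by simp
      have "x/12 = real p / (12 * real q * real n)"
        using assms(4) by (simp add: x_def L_def)
      also have "\<dots> \<le> 1 / (2 * real p)"
        using big assms(2,3) n1 by (simp add: divide_simps power2_eq_square mult_ac)
      finally have b3: "1/(exp x - 1) < y + 1/(2 * real p)" using b2 by simp
      define k where "k = \<lfloor>1/(exp x - 1)\<rfloor>"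
      have Mk: "Mprime \<theta> n = k" by (simp add: Mprime_def pw k_def)
      have ky: "k \<ge> \<lfloor>y\<rfloor>" unfolding k_def using b1 floor_mono by blast
      have kne: "k \<noteq> \<lfloor>y\<rfloor>" using ne Mk y_def L_def by simp
      then have "k \<ge> \<lfloor>y\<rfloor> + 1" using ky by simp
      then have "real_of_int k > y" by linarith
      moreover have "real_of_int k < y + 1/(2 * real p)" using b3 k_def by linarith
      moreover have "2 * real p * y = real (2*n*q) - real p"
        using assms(2,3) unfolding y_def L_def assms(4) by (simp add: field_simps)
      ultimately have "2 * real p * real_of_int k > real (2*n*q) - real p"
        and "2 * real p * real_of_int k < real (2*n*q) - real p + 1"
      proof -
        assume a: "y < real_of_int k" "real_of_int k < y + 1 / (2 * real p)"
          "2 * real p * y = real (2*n*q) - real p"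
        have pp: "2 * real p > 0" using assms(2) by simp
        have "2 * real p * y < 2 * real p * real_of_int k" using a(1) pp by simp
        then show "2 * real p * real_of_int k > real (2*n*q) - real p" using a(3) by simp
        have "2 * real p * real_of_int k < 2 * real p * (y + 1 / (2 * real p))"
          using a(2) pp by simp
        also have "\<dots> = 2 * real p * y + 1" using pp by (simp add: field_simps)
        finally show "2 * real p * real_of_int k < real (2*n*q) - real p + 1" using a(3) by simp
      qed
      then have "real_of_int (int (2*n*q) - int p) < real_of_int (2 * int p * k)"
          "real_of_int (2 * int p * k) < real_of_int (int (2*n*q) - int p + 1)"
        by (simp_all add: of_nat_mult)
      then have "2 * int p * k > int (2*n*q) - int p" "2 * int p * k < int (2*n*q) - int p + 1"
        using of_int_less_iff by blast+
      then show False by linarith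
    qed
    then show "n \<in> {n. 1 \<le> real n \<and> real n < real p ^ 2 / (6 * real q)}" using n1 by simp
  qed
  moreover have "finite {n::nat. 1 \<le> real n \<and> real n < real p ^ 2 / (6 * real q)}"
  proof (rule finite_subset)
    show "{n::nat. 1 \<le> real n \<and> real n < real p ^ 2 / (6 * real q)} \<subseteq> {..nat \<lceil>real p ^ 2 / (6 * real q)\<rceil>}"
    proof
      fix n :: nat assume "n \<in> {n::nat. 1 \<le> real n \<and> real n < real p ^ 2 / (6 * real q)}"
      then have "real n < real p ^ 2 / (6 * real q)" by simp
      moreover have "real p ^ 2 / (6 * real q) \<le> real_of_int \<lceil>real p ^ 2 / (6 * real q)\<rceil>"
        by (rule le_of_int_ceiling)
      ultimately have "int n \<le> \<lceil>real p ^ 2 / (6 * real q)\<rceil>" by linarith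
      then show "n \<in> {..nat \<lceil>real p ^ 2 / (6 * real q)\<rceil>}" by simp
    qed
  qed simp
  ultimately show ?thesis using finite_subset by blast
qed

end
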